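(* Let $0<\alpha\le 8$, let $\mathcal{D}$ be a distribution on $[0,1]$ with mean $\theta_i$, let $\theta\in(0,1)$ and $\Delta_i=|\theta_i-\theta|$. Let $X_{i,1},X_{i,2},\dots$ be i.i.d. from $\mathcal{D}$, $\hat\Delta_{i,t}=|\frac1t\sum_{s=1}^tX_{i,s}-\theta|$ and $\xi_{i,t}=\alpha t\hat\Delta_{i,t}^2+0.5\ln t$. For $C>0$ let $\tau_{i,C}$ be the smallest positive integer $t$ with $\xi_{i,t}>C$. Then: (a) $\tau_{i,C}\le 2\exp(2C)$; (b) if $C>\ln\Delta_i^{-1}$, then for every $k\ge1$, \[ \Pr\Big(\tau_{i,C}>\frac{40}{\alpha}\cdot\frac{C-\ln\Delta_i^{-1}+k}{\Delta_i^2}\Big)\le 2\exp(-40k/\alpha). \]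
   Context: Use the convention $\ln(1/0)=+\infty$ (so (b) is vacuous when $\Delta_i=0$). *)

theory Defs
  imports "HOL-Probability.Probability"
begin

definition hatDelta :: "real \<Rightarrow> (nat \<Rightarrow> real) \<Rightarrow> nat \<Rightarrow> real" where
  "hatDelta \<theta> x t = \<bar>(\<Sum>s=1..t. x s) / real t - \<theta>\<bar>"

definition xi :: "real \<Rightarrow> real \<Rightarrow> (nat \<Rightarrow> real) \<Rightarrow> nat \<Rightarrow> real" where
  "xi \<alpha> \<theta> x t = \<alpha> * real t * (hatDelta \<theta> x t)\<^sup>2 + 0.5 * ln (real t)"

definition tau :: "real \<Rightarrow> real \<Rightarrow> real \<Rightarrow> (nat \<Rightarrow> real) \<Rightarrow> nat" where
  "tau \<alpha> \<theta> C x = (LEAST t::nat. 0 < t \<and> xi \<alpha> \<theta> x t > C)"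

end

theory Submission
  imports Defs
begin

lemma partA:
  assumes "0 < \<alpha>" "0 < C"
  shows "real (tau \<alpha> \<theta> C x) \<le> 2 * exp (2 * C)"
proof -
  define m where "m = nat (floor (exp (2 * C))) + 1"
  have e0: "floor (exp (2 * C)) \<ge> 0" by simp
  have rm: "real m = real_of_int (floor (exp (2 * C))) + 1" unfolding m_def using e0 by simp
  have m1: "real m > exp (2 * C)" unfolding rm by linarith
  have m2: "real m \<le> exp (2 * C) + 1" unfolding rm by linarith
  have mpos: "0 < m" unfolding m_def by simp
  have "ln (real m) > 2 * C" using m1
    by (metis exp_gt_zero ln_exp ln_less_cancel_iff order.strict_trans)
  moreover have "\<alpha> * real m * (hatDelta \<theta> x m)\<^sup>2 \<ge> 0" using assms by simp
  ultimately have "xi \<alpha> \<theta> x m > C" unfolding xi_def by simp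
  hence "tau \<alpha> \<theta> C x \<le> m" unfolding tau_def using mpos by (intro Least_le) simp
  hence "real (tau \<alpha> \<theta> C x) \<le> real m" by simp
  also have "\<dots> \<le> 2 * exp (2 * C)" using m2 by (smt (verit) one_le_exp_iff assms(2))
  finally show ?thesis .
qed

theorem lemma7:
  fixes M :: "'a measure" and D :: "real measure"
    and X :: "nat \<Rightarrow> 'a \<Rightarrow> real"
    and \<alpha> \<theta> \<theta>i \<Delta>i C :: real
  assumes "prob_space M"
    and D_prob: "prob_space D" and D_sets: "sets D = sets borel"
    and D_supp: "measure D {0..1} = 1"
    and mean: "\<theta>i = (\<integral>x. x \<partial>D)"
    and indep: "prob_space.indep_vars M (\<lambda>_. borel) X UNIV"
    and distr: "\<And>s. distr M borel (X s) = D"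
    and alpha: "0 < \<alpha>" "\<alpha> \<le> 8"
    and theta: "0 < \<theta>" "\<theta> < 1"
    and Delta: "\<Delta>i = \<bar>\<theta>i - \<theta>\<bar>"
    and C: "0 < C"
  shows "(\<forall>\<omega>\<in>space M. real (tau \<alpha> \<theta> C (\<lambda>s. X s \<omega>)) \<le> 2 * exp (2 * C))
       \<and> ((\<Delta>i > 0 \<and> C > ln (1 / \<Delta>i)) \<longrightarrow>
          (\<forall>k::real. k \<ge> 1 \<longrightarrow>
             measure M {\<omega> \<in> space M. real (tau \<alpha> \<theta> C (\<lambda>s. X s \<omega>))
                 > (40 / \<alpha>) * ((C - ln (1 / \<Delta>i) + k) / \<Delta>i\<^sup>2)}
             \<le> 2 * exp (- 40 * k / \<alpha>)))"
proof -
  interpret P: prob_space M by fact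
  have rv: "X s \<in> borel_measurable M" for s
    using indep unfolding P.indep_vars_def by blast
  have "AE x in D. x \<in> {0..1}"
    using prob_space.AE_prob_1[OF D_prob D_supp] .
  hence AEX: "AE \<omega> in M. X s \<omega> \<in> {0..1}" for s
    using distr[of s] by (subst (asm) distr[symmetric, of s]) (simp add: AE_distr_iff rv)
  have muE: "P.expectation (X s) = \<theta>i" for s
    unfolding mean distr[symmetric, of s] by (rule integral_distr[symmetric]) (auto simp: rv)
  have intX: "integrable M (X 0)"
    by (rule P.integrable_const_bound[where B=1], rule eventually_mono[OF AEX[of 0]]) (auto simp: rv)
  have th0: "\<theta>i \<ge> 0" unfolding muE[of 0, symmetric]
    using AEX[of 0] by (intro integral_nonneg_AE) (auto elim!: eventually_mono)
  have th1: "\<theta>i \<le> 1" unfolding muE[of 0, symmetric]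
  proof -
    have "P.expectation (X 0) \<le> P.expectation (\<lambda>_. 1::real)"
      using AEX[of 0] intX by (intro integral_mono_AE) (auto elim!: eventually_mono)
    thus "P.expectation (X 0) \<le> 1" by (simp add: P.prob_space)
  qed
  have D1: "\<Delta>i < 1" using Delta th0 th1 theta by auto
  show ?thesis
  proof (intro conjI ballI impI allI)
    fix \<omega> show "real (tau \<alpha> \<theta> C (\<lambda>s. X s \<omega>)) \<le> 2 * exp (2 * C)"
      using partA alpha C by blast
  next
    fix k :: real
    assume H: "\<Delta>i > 0 \<and> C > ln (1 / \<Delta>i)" and k: "k \<ge> 1"
    define L where "L = C - ln (1 / \<Delta>i)"
    have L: "L > 0" using H L_def by simp
    define T where "T = (40 / \<alpha>) * ((C - ln (1 / \<Delta>i) + k) / \<Delta>i\<^sup>2)"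
    have TD: "T * \<Delta>i\<^sup>2 = 40 * (L + k) / \<alpha>" unfolding T_def L_def using H alpha by (simp add: field_simps)
    have D2: "\<Delta>i\<^sup>2 < 1" "\<Delta>i\<^sup>2 > 0" using D1 H by (auto simp: power_less_one_iff)
    have TD5: "T * \<Delta>i\<^sup>2 \<ge> 5"
    proof -
      have "40 * (L + k) / \<alpha> \<ge> 40 * 1 / 8" using L k alpha
        by (intro frac_le) auto
      thus ?thesis using TD by simp
    qed
    have Tpos: "T > 0" using TD5 D2 by (smt (verit) mult_nonpos_nonneg)
    have T5: "T \<ge> 5" using TD5 D2 Tpos
      by (smt (verit) mult_left_le)
    define n where "n = nat (floor T)"
    have n1: "real n > T - 1" "real n \<le> T" unfolding n_def using T5 by linarith+
    have n45: "real n \<ge> 4 * T / 5" using n1 T5 by linarith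
    have npos: "n > 0" using n1 T5 by linarith
    define \<epsilon> where "\<epsilon> = 4 * \<Delta>i / 5"
    define B where "B = {\<omega>\<in>space M. \<bar>(\<Sum>i\<in>{1..n}. X i \<omega>) / real (card {1..n}) - P.expectation (X 0)\<bar> \<ge> \<epsilon>}"
    have nD: "real n * \<Delta>i\<^sup>2 \<ge> 4 * (T * \<Delta>i\<^sup>2) / 5"
    proof -
      have "(4 * T / 5) * \<Delta>i\<^sup>2 \<le> real n * \<Delta>i\<^sup>2" using n45 D2 by (intro mult_right_mono) auto
      thus ?thesis by simp
    qed
    have sub: "{\<omega> \<in> space M. real (tau \<alpha> \<theta> C (\<lambda>s. X s \<omega>)) > T} \<subseteq> B"
    proof safe
      fix \<omega> assume om: "\<omega> \<in> space M" and tt: "real (tau \<alpha> \<theta> C (\<lambda>s. X s \<omega>)) > T"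
      have "n < tau \<alpha> \<theta> C (\<lambda>s. X s \<omega>)" using tt n1 by linarith
      hence "\<not> (0 < n \<and> xi \<alpha> \<theta> (\<lambda>s. X s \<omega>) n > C)" unfolding tau_def by (rule not_less_Least)
      hence xin: "xi \<alpha> \<theta> (\<lambda>s. X s \<omega>) n \<le> C" using npos by auto
      define h where "h = hatDelta \<theta> (\<lambda>s. X s \<omega>) n"
      define m where "m = (\<Sum>i\<in>{1..n}. X i \<omega>) / real n"
      have hm: "h = \<bar>m - \<theta>\<bar>" unfolding h_def m_def hatDelta_def by simp
      have xi2: "\<alpha> * real n * h\<^sup>2 + 0.5 * ln (real n) \<le> C" using xin unfolding xi_def h_def .
      have "real n * \<Delta>i\<^sup>2 \<ge> 1" using nD TD5 by linarith
      hence "real n \<ge> 1 / \<Delta>i\<^sup>2" using D2 by (simp add: field_simps)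
      hence "ln (real n) \<ge> ln (1 / \<Delta>i\<^sup>2)" using D2 npos by (subst ln_le_cancel_iff) auto
      moreover have "ln (1 / \<Delta>i\<^sup>2) = 2 * ln (1 / \<Delta>i)" using H
        by (simp add: ln_div ln_realpow)
      ultimately have an: "\<alpha> * real n * h\<^sup>2 \<le> L" using xi2 unfolding L_def by linarith
      have "\<alpha> * (real n * \<Delta>i\<^sup>2) \<ge> 32 * (L + k)" using nD TD alpha by (simp add: field_simps)
      hence "32 * (L + k) * h\<^sup>2 \<le> \<alpha> * (real n * \<Delta>i\<^sup>2) * h\<^sup>2" by (intro mult_right_mono) auto
      also have "\<dots> = (\<alpha> * real n * h\<^sup>2) * \<Delta>i\<^sup>2" by simp
      also have "\<dots> \<le> L * \<Delta>i\<^sup>2" using an D2 by (intro mult_right_mono) auto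
      finally have "32 * (L + k) * h\<^sup>2 \<le> L * \<Delta>i\<^sup>2" .
      moreover have "L * \<Delta>i\<^sup>2 < (L + k) * \<Delta>i\<^sup>2" using D2 k by (intro mult_strict_right_mono) auto
      ultimately have "(L + k) * (32 * h\<^sup>2) < (L + k) * \<Delta>i\<^sup>2" by (simp add: algebra_simps)
      hence "32 * h\<^sup>2 < \<Delta>i\<^sup>2" using L k by (subst (asm) mult_less_cancel_left_pos) auto
      moreover have "0 \<le> h\<^sup>2" by simp
      ultimately have "h\<^sup>2 * 25 < \<Delta>i\<^sup>2" by linarith
      hence "h\<^sup>2 < (\<Delta>i / 5)\<^sup>2" by (simp add: power_divide)
      moreover have "0 \<le> \<Delta>i / 5" using H by simp
      ultimately have hl: "h < \<Delta>i / 5" by (rule power_less_imp_less_base)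
      have tri: "\<Delta>i \<le> \<bar>m - \<theta>i\<bar> + \<bar>m - \<theta>\<bar>" unfolding Delta by arith
      have "\<epsilon> \<le> \<bar>m - \<theta>i\<bar>" unfolding \<epsilon>_def using hl hm tri by linarith
      thus "\<omega> \<in> B" unfolding B_def using om muE[of 0] m_def by simp
    qed
    have AE0: "AE x in M. 0 \<le> X 0 x" by (rule eventually_mono[OF AEX[of 0]]) auto
    have AE1: "AE x in M. X 0 x \<le> 1" by (rule eventually_mono[OF AEX[of 0]]) auto
    interpret HI: Hoeffding_ineq_iid M "{1..n}" X "X 0" 0 1 \<theta>i
    proof unfold_locales
      show "P.indep_vars (\<lambda>_. borel) X {1..n}" by (rule P.indep_vars_subset[OF indep]) auto
      show "distr M borel (X i) = distr M borel (X 0)" for i using distr by simp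
    qed (rule AEX | auto simp: rv muE AE0 AE1)+
    have hoef: "measure M B \<le> 2 * exp (-2 * real n * \<epsilon>\<^sup>2 / (1 - 0)\<^sup>2)"
      using HI.Hoeffding_ineq_abs_ge'[of \<epsilon>] H npos unfolding B_def \<epsilon>_def by (simp add: muE)
    have "- 2 * real n * \<epsilon>\<^sup>2 / (1 - 0)\<^sup>2 = - (32 / 25) * (real n * \<Delta>i\<^sup>2)"
      unfolding \<epsilon>_def by (simp add: power2_eq_square)
    also have "\<dots> \<le> - (32 / 25) * (4 * (40 * (L + k) / \<alpha>) / 5)"
    proof -
      have "4 * (40 * (L + k) / \<alpha>) / 5 \<le> real n * \<Delta>i\<^sup>2" using nD TD by simp
      thus ?thesis by linarith
    qed
    also have "\<dots> \<le> - 40 * k / \<alpha>" using alpha L k by (simp add: field_simps)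
    finally have "2 * exp (-2 * real n * \<epsilon>\<^sup>2 / (1 - 0)\<^sup>2) \<le> 2 * exp (- 40 * k / \<alpha>)" by simp
    moreover have "measure M {\<omega> \<in> space M. real (tau \<alpha> \<theta> C (\<lambda>s. X s \<omega>)) > T} \<le> measure M B"
    proof (cases "{\<omega> \<in> space M. real (tau \<alpha> \<theta> C (\<lambda>s. X s \<omega>)) > T} \<in> sets M")
      case True
      have "B \<in> sets M" unfolding B_def using rv by measurable
      then show ?thesis using True sub by (intro P.finite_measure_mono) auto
    next
      case False
      then show ?thesis by (simp add: measure_notin_sets)
    qed
    ultimately show "measure M {\<omega> \<in> space M. real (tau \<alpha> \<theta> C (\<lambda>s. X s \<omega>))
                 > (40 / \<alpha>) * ((C - ln (1 / \<Delta>i) + k) / \<Delta>i\<^sup>2)}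
             \<le> 2 * exp (- 40 * k / \<alpha>)" using hoef unfolding T_def by linarith
  qed
qed

end
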